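(* Let $M$ be a measure-many quantum finite automaton that uses both a left and a right end-marker. Then there exists a measure-many quantum finite automaton $M'$ that uses only a right end-marker and is equivalent to $M$, i.e. for every $x\in\Sigma^*$ the probability that $M$ accepts $x$ equals the probability that $M'$ accepts $x$.
   Context: A measure-many QFA (MM-QFA) over $\Sigma$ with one (right) end-marker is a tuple $(Q,\Sigma,\{U_\sigma\}_{\sigma\in\Sigma\cup\{\$\}},q_0,Q_{acc},Q_{rej})$ with $Q$ finite indexing an orthonormal basis of $\mathbb{C}^Q$, end-marker $\$\notin\Sigma$, unitary $U_\sigma$, initial state $q_0$, and $Q$ partitioned into $Q_{acc},Q_{rej},Q_{non}$ with orthogonal projections $P_{acc},P_{rej},P_{non}$. On input $x$ it processes the symbols of $x\$$ maintaining $(\psi,p_{acc},p_{rej})$, initially $(|q_0\rangle,0,0)$; on reading $\sigma$: $\psi'=U_\sigma\psi$, $p_{acc}\mathrel{+}=\|P_{acc}\psi'\|^2$, $p_{rej}\mathrel{+}=\|P_{rej}\psi'\|^2$, $\psi\leftarrow P_{non}\psi'$; the acceptance probability is the final $p_{acc}$. An MM-QFA with both end-markers additionally has a unitary $U_{¢}$ for a left end-marker ${¢}\notin\Sigma\cup\{\$\}$ and processes ${¢}x\$$ in the same way (including the measurement after reading ${¢}$). *)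

theory Defs
  imports Complex_Main
begin

text \<open>States of an automaton with n basis states are the indices {0..<n};
  vectors of C^Q are functions nat => complex (only entries below n matter),
  operators are n x n matrices given as functions nat => nat => complex.\<close>

definition mvec :: "nat \<Rightarrow> (nat \<Rightarrow> nat \<Rightarrow> complex) \<Rightarrow> (nat \<Rightarrow> complex) \<Rightarrow> (nat \<Rightarrow> complex)" where
  "mvec n U v = (\<lambda>i. if i < n then (\<Sum>j<n. U i j * v j) else 0)"

definition unitary_mat :: "nat \<Rightarrow> (nat \<Rightarrow> nat \<Rightarrow> complex) \<Rightarrow> bool" where
  "unitary_mat n U \<longleftrightarrow>
     (\<forall>i<n. \<forall>k<n. (\<Sum>j<n. cnj (U j i) * U j k) = (if i = k then 1 else 0)) \<and>
     (\<forall>i<n. \<forall>k<n. (\<Sum>j<n. U i j * cnj (U k j)) = (if i = k then 1 else 0))"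

definition proj :: "nat set \<Rightarrow> (nat \<Rightarrow> complex) \<Rightarrow> (nat \<Rightarrow> complex)" where
  "proj S v = (\<lambda>i. if i \<in> S then v i else 0)"

definition sqnorm :: "nat \<Rightarrow> (nat \<Rightarrow> complex) \<Rightarrow> real" where
  "sqnorm n v = (\<Sum>i<n. (cmod (v i))^2)"

text \<open>One step of an MM-QFA: apply the unitary, measure, keep the non-halting part.
  The configuration is (psi, p_acc, p_rej).\<close>
definition mm_step :: "nat \<Rightarrow> nat set \<Rightarrow> nat set \<Rightarrow>
    (nat \<Rightarrow> complex) \<times> real \<times> real \<Rightarrow> (nat \<Rightarrow> nat \<Rightarrow> complex) \<Rightarrow> (nat \<Rightarrow> complex) \<times> real \<times> real" where
  "mm_step n Acc Rej c U =
     (let \<psi>' = mvec n U (fst c);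
          Non = {..<n} - Acc - Rej
      in (proj Non \<psi>',
          fst (snd c) + sqnorm n (proj Acc \<psi>'),
          snd (snd c) + sqnorm n (proj Rej \<psi>')))"

definition mm_acc_run :: "nat \<Rightarrow> nat \<Rightarrow> nat set \<Rightarrow> nat set \<Rightarrow> (nat \<Rightarrow> nat \<Rightarrow> complex) list \<Rightarrow> real" where
  "mm_acc_run n q0 Acc Rej Us =
     fst (snd (foldl (mm_step n Acc Rej) ((\<lambda>i. if i = q0 then 1 else 0), 0, 0) Us))"

text \<open>MM-QFA with one (right) end-marker over alphabet 'a:
  n states {0..<n}, unitaries U (Some a) for letters a and U None for the end-marker \$,
  initial state q0, accepting states Acc, rejecting states Rej.\<close>
definition mmqfa1 :: "nat \<Rightarrow> ('a option \<Rightarrow> nat \<Rightarrow> nat \<Rightarrow> complex) \<Rightarrow> nat \<Rightarrow> nat set \<Rightarrow> nat set \<Rightarrow> bool" where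
  "mmqfa1 n U q0 Acc Rej \<longleftrightarrow> q0 < n \<and> Acc \<subseteq> {..<n} \<and> Rej \<subseteq> {..<n} \<and> Acc \<inter> Rej = {} \<and>
     (\<forall>\<sigma>. unitary_mat n (U \<sigma>))"

definition acc1 :: "nat \<Rightarrow> ('a option \<Rightarrow> nat \<Rightarrow> nat \<Rightarrow> complex) \<Rightarrow> nat \<Rightarrow> nat set \<Rightarrow> nat set \<Rightarrow> 'a list \<Rightarrow> real" where
  "acc1 n U q0 Acc Rej x = mm_acc_run n q0 Acc Rej (map (\<lambda>a. U (Some a)) x @ [U None])"

text \<open>MM-QFA with both end-markers: additionally a unitary Uc for the left end-marker,
  processing the input (left marker) x \$.\<close>
definition mmqfa2 :: "nat \<Rightarrow> (nat \<Rightarrow> nat \<Rightarrow> complex) \<Rightarrow> ('a option \<Rightarrow> nat \<Rightarrow> nat \<Rightarrow> complex) \<Rightarrow> nat \<Rightarrow> nat set \<Rightarrow> nat set \<Rightarrow> bool" where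
  "mmqfa2 n Uc U q0 Acc Rej \<longleftrightarrow> unitary_mat n Uc \<and> mmqfa1 n U q0 Acc Rej"

definition acc2 :: "nat \<Rightarrow> (nat \<Rightarrow> nat \<Rightarrow> complex) \<Rightarrow> ('a option \<Rightarrow> nat \<Rightarrow> nat \<Rightarrow> complex) \<Rightarrow> nat \<Rightarrow> nat set \<Rightarrow> nat set \<Rightarrow> 'a list \<Rightarrow> real" where
  "acc2 n Uc U q0 Acc Rej x = mm_acc_run n q0 Acc Rej (Uc # map (\<lambda>a. U (Some a)) x @ [U None])"

end

theory Submission
  imports Defs
begin


definition mmul :: "nat \<Rightarrow> (nat \<Rightarrow> nat \<Rightarrow> complex) \<Rightarrow> (nat \<Rightarrow> nat \<Rightarrow> complex) \<Rightarrow> (nat \<Rightarrow> nat \<Rightarrow> complex)" where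
  "mmul n A B = (\<lambda>i j. \<Sum>k<n. A i k * B k j)"

lemma mvec_mmul: "mvec n (mmul n A B) v = mvec n A (mvec n B v)"
proof (rule ext)
  fix i
  show "mvec n (mmul n A B) v i = mvec n A (mvec n B v) i"
  proof (cases "i < n")
    case True
    have "(\<Sum>j<n. (\<Sum>k<n. A i k * B k j) * v j) = (\<Sum>j<n. \<Sum>k<n. A i k * B k j * v j)"
      by (simp add: sum_distrib_right)
    also have "\<dots> = (\<Sum>k<n. \<Sum>j<n. A i k * B k j * v j)" by (rule sum.swap)
    also have "\<dots> = (\<Sum>k<n. A i k * (\<Sum>j<n. B k j * v j))"
      by (simp add: sum_distrib_left mult.assoc)
    finally show ?thesis using True by (simp add: mvec_def mmul_def)
  qed (simp add: mvec_def)
qed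

lemma delta_sum: "l < (n::nat) \<Longrightarrow> (\<Sum>m<n. f m * (if l = m then 1 else 0)) = (f l :: complex)"
proof -
  assume "l < n"
  have "(\<Sum>m<n. f m * (if l = m then 1 else 0)) = (\<Sum>m<n. if l = m then f m else 0)"
    by (rule sum.cong) auto
  also have "\<dots> = f l" using \<open>l < n\<close> by simp
  finally show ?thesis .
qed

lemma unitary_mmul:
  assumes A: "unitary_mat n A" and B: "unitary_mat n B"
  shows "unitary_mat n (mmul n A B)"
  unfolding unitary_mat_def
proof (intro conjI allI impI)
  fix i k assume i: "i < n" and k: "k < n"
  have "(\<Sum>j<n. cnj (mmul n A B j i) * mmul n A B j k)
      = (\<Sum>j<n. \<Sum>m<n. \<Sum>l<n. cnj (B l i) * B m k * (cnj (A j l) * A j m))"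
    by (simp add: mmul_def sum_product mult_ac)
  also have "\<dots> = (\<Sum>m<n. \<Sum>j<n. \<Sum>l<n. cnj (B l i) * B m k * (cnj (A j l) * A j m))"
    by (rule sum.swap)
  also have "\<dots> = (\<Sum>m<n. \<Sum>l<n. \<Sum>j<n. cnj (B l i) * B m k * (cnj (A j l) * A j m))"
    by (rule sum.cong[OF refl], rule sum.swap)
  also have "\<dots> = (\<Sum>m<n. \<Sum>l<n. cnj (B l i) * B m k * (if l = m then 1 else 0))"
    using A unfolding unitary_mat_def by (simp add: sum_distrib_left[symmetric])
  also have "\<dots> = (\<Sum>l<n. cnj (B l i) * B l k)"
    by (simp add: if_distrib sum.delta sum.delta' cong: if_cong)
  also have "\<dots> = (if i = k then 1 else 0)" using B i k unfolding unitary_mat_def by simp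
  finally show "(\<Sum>j<n. cnj (mmul n A B j i) * mmul n A B j k) = (if i = k then 1 else 0)" .
next
  fix i k assume i: "i < n" and k: "k < n"
  have "(\<Sum>j<n. mmul n A B i j * cnj (mmul n A B k j))
      = (\<Sum>j<n. \<Sum>l<n. \<Sum>m<n. A i l * cnj (A k m) * (B l j * cnj (B m j)))"
    by (simp add: mmul_def sum_product mult_ac)
  also have "\<dots> = (\<Sum>l<n. \<Sum>j<n. \<Sum>m<n. A i l * cnj (A k m) * (B l j * cnj (B m j)))"
    by (rule sum.swap)
  also have "\<dots> = (\<Sum>l<n. \<Sum>m<n. \<Sum>j<n. A i l * cnj (A k m) * (B l j * cnj (B m j)))"
    by (rule sum.cong[OF refl], rule sum.swap)
  also have "\<dots> = (\<Sum>l<n. \<Sum>m<n. A i l * cnj (A k m) * (if l = m then 1 else 0))"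
    using B unfolding unitary_mat_def by (simp add: sum_distrib_left[symmetric])
  also have "\<dots> = (\<Sum>l<n. A i l * cnj (A k l))"
    by (simp add: delta_sum)
  also have "\<dots> = (if i = k then 1 else 0)" using A i k unfolding unitary_mat_def by simp
  finally show "(\<Sum>j<n. mmul n A B i j * cnj (mmul n A B k j)) = (if i = k then 1 else 0)" .
qed


definition supp :: "nat \<Rightarrow> (nat \<Rightarrow> complex) \<Rightarrow> bool" where
  "supp n v \<longleftrightarrow> (\<forall>i. n \<le> i \<longrightarrow> v i = 0)"

definition herm :: "(nat \<Rightarrow> nat \<Rightarrow> complex) \<Rightarrow> bool" where
  "herm V \<longleftrightarrow> (\<forall>i j. cnj (V j i) = V i j)"

definition commutes :: "nat \<Rightarrow> (nat \<Rightarrow> nat \<Rightarrow> complex) \<Rightarrow> nat set \<Rightarrow> bool" where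
  "commutes n V S \<longleftrightarrow> (\<forall>i<n. \<forall>j<n. V i j \<noteq> 0 \<longrightarrow> (i \<in> S \<longleftrightarrow> j \<in> S))"

lemma supp_mvec: "supp n (mvec n U v)"
  by (simp add: supp_def mvec_def)

lemma supp_proj: "supp n v \<Longrightarrow> supp n (proj S v)"
  by (simp add: supp_def proj_def)

lemma mvec_inv:
  assumes U: "unitary_mat n V" and H: "herm V" and s: "supp n \<psi>"
  shows "mvec n V (mvec n V \<psi>) = \<psi>"
proof (rule ext)
  fix i
  show "mvec n V (mvec n V \<psi>) i = \<psi> i"
  proof (cases "i < n")
    case True
    have "(\<Sum>k<n. V i k * mvec n V \<psi> k) = (\<Sum>k<n. \<Sum>j<n. V i k * V k j * \<psi> j)"
      by (simp add: mvec_def sum_distrib_left mult.assoc)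
    also have "\<dots> = (\<Sum>j<n. \<Sum>k<n. V i k * V k j * \<psi> j)" by (rule sum.swap)
    also have "\<dots> = (\<Sum>j<n. \<psi> j * (\<Sum>k<n. V i k * cnj (V j k)))"
      using H by (simp add: herm_def sum_distrib_left sum_distrib_right mult_ac)
    also have "\<dots> = (\<Sum>j<n. \<psi> j * (if i = j then 1 else 0))"
      using U True unfolding unitary_mat_def by (intro sum.cong) auto
    also have "\<dots> = \<psi> i" using True by (rule delta_sum)
    finally show ?thesis using True by (simp add: mvec_def)
  next
    case False then show ?thesis using s by (simp add: mvec_def supp_def)
  qed
qed

lemma sqnorm_mvec:
  assumes U: "unitary_mat n V"
  shows "sqnorm n (mvec n V z) = sqnorm n z"
proof -
  have "complex_of_real (sqnorm n (mvec n V z)) = (\<Sum>i<n. mvec n V z i * cnj (mvec n V z i))"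
    by (simp only: sqnorm_def of_real_sum complex_norm_square)
  also have "\<dots> = (\<Sum>i<n. \<Sum>j<n. \<Sum>k<n. z j * cnj (z k) * (cnj (V i k) * V i j))"
    by (simp add: mvec_def sum_product mult_ac)
  also have "\<dots> = (\<Sum>j<n. \<Sum>i<n. \<Sum>k<n. z j * cnj (z k) * (cnj (V i k) * V i j))"
    by (rule sum.swap)
  also have "\<dots> = (\<Sum>j<n. \<Sum>k<n. \<Sum>i<n. z j * cnj (z k) * (cnj (V i k) * V i j))"
    by (rule sum.cong[OF refl], rule sum.swap)
  also have "\<dots> = (\<Sum>j<n. \<Sum>k<n. z j * cnj (z k) * (if k = j then 1 else 0))"
    using U unfolding unitary_mat_def by (simp add: sum_distrib_left[symmetric])
  also have "\<dots> = (\<Sum>j<n. z j * cnj (z j))"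
    by (intro sum.cong refl) (simp add: if_distrib cong: if_cong)
  also have "\<dots> = complex_of_real (sqnorm n z)"
    by (simp only: sqnorm_def of_real_sum complex_norm_square)
  finally show ?thesis by (simp only: of_real_eq_iff)
qed

lemma proj_mvec:
  assumes "commutes n V S"
  shows "proj S (mvec n V y) = mvec n V (proj S y)"
proof (rule ext)
  fix i
  show "proj S (mvec n V y) i = mvec n V (proj S y) i"
  proof (cases "i < n")
    case True
    have "(\<Sum>j<n. V i j * y j) = (\<Sum>j<n. V i j * (if j \<in> S then y j else 0))" if "i \<in> S"
      using assms that True unfolding commutes_def by (intro sum.cong) auto
    moreover have "0 = (\<Sum>j<n. V i j * (if j \<in> S then y j else 0))" if "i \<notin> S"
      using assms that True unfolding commutes_def by (intro sum.neutral[symmetric]) auto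
    ultimately show ?thesis using True by (auto simp: proj_def mvec_def)
  qed (simp add: proj_def mvec_def)
qed

lemma step_conj:
  assumes U: "unitary_mat n V" and H: "herm V" and cA: "commutes n V Acc"
    and cR: "commutes n V Rej" and s: "supp n \<psi>"
  shows "mm_step n Acc Rej (mvec n V \<psi>, p, r) (mmul n V (mmul n W V))
       = (mvec n V (fst (mm_step n Acc Rej (\<psi>, p, r) W)), snd (mm_step n Acc Rej (\<psi>, p, r) W))"
proof -
  have cN: "commutes n V ({..<n} - Acc - Rej)"
    using cA cR unfolding commutes_def by auto
  have e: "mvec n (mmul n V (mmul n W V)) (mvec n V \<psi>) = mvec n V (mvec n W \<psi>)"
    by (simp add: mvec_mmul mvec_inv[OF U H s])
  show ?thesis
    unfolding mm_step_def Let_def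
    by (simp add: e proj_mvec[OF cN] proj_mvec[OF cA] proj_mvec[OF cR] sqnorm_mvec[OF U])
qed


lemma run_conj:
  assumes U: "unitary_mat n V" and H: "herm V" and cA: "commutes n V Acc"
    and cR: "commutes n V Rej"
  shows "supp n \<psi> \<Longrightarrow> foldl (mm_step n Acc Rej) (mvec n V \<psi>, p, r) (map (\<lambda>s. mmul n V (mmul n (W s) V)) xs)
       = (mvec n V (fst (foldl (mm_step n Acc Rej) (\<psi>, p, r) (map W xs))),
          snd (foldl (mm_step n Acc Rej) (\<psi>, p, r) (map W xs)))"
proof (induction xs arbitrary: \<psi> p r)
  case Nil then show ?case by simp
next
  case (Cons a xs)
  obtain \<psi>' p' r' where eq: "mm_step n Acc Rej (\<psi>, p, r) (W a) = (\<psi>', p', r')"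
    by (cases "mm_step n Acc Rej (\<psi>, p, r) (W a)") auto
  have s': "supp n \<psi>'"
    using eq by (auto simp: mm_step_def Let_def supp_def proj_def mvec_def)
  have st: "mm_step n Acc Rej (mvec n V \<psi>, p, r) (mmul n V (mmul n (W a) V)) = (mvec n V \<psi>', p', r')"
    using step_conj[OF U H cA cR Cons.prems, of p r "W a"] eq by simp
  show ?case using Cons.IH[OF s'] st eq by simp
qed

lemma foldl_rel:
  "R a b \<Longrightarrow> (\<And>x y z. R x y \<Longrightarrow> R (f x z) (g y z)) \<Longrightarrow> R (foldl f a zs) (foldl g b zs)"
  by (induction zs arbitrary: a b) auto



definition hh :: "nat \<Rightarrow> (nat \<Rightarrow> complex) \<Rightarrow> nat \<Rightarrow> nat \<Rightarrow> complex" where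
  "hh m u = (\<lambda>i j. (if i = j then 1 else 0) - 2 * u i * cnj (u j) / complex_of_real (sqnorm m u))"

lemma hh_herm: "herm (hh m u)"
  by (simp add: herm_def hh_def)

lemma cnj_sq_sum: "(\<Sum>j<m. cnj (u j) * u j) = complex_of_real (sqnorm m u)"
  by (simp only: sqnorm_def of_real_sum complex_norm_square mult.commute)

lemma delta_sum2: "i < (m::nat) \<Longrightarrow> (\<Sum>j<m. (if i = j then 1 else 0) * f j) = (f i :: complex)"
proof -
  assume "i < m"
  have "(\<Sum>j<m. (if i = j then 1 else 0) * f j) = (\<Sum>j<m. if i = j then f j else 0)"
    by (rule sum.cong) auto
  also have "\<dots> = f i" using \<open>i < m\<close> by simp
  finally show ?thesis .
qed

lemma cnj_sq_sum2: "(\<Sum>j<m. u j * cnj (u j)) = complex_of_real (sqnorm m u)"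
  by (simp only: sqnorm_def of_real_sum complex_norm_square)

lemma hh_sq:
  assumes i: "i < m" and k: "k < m"
  shows "(\<Sum>j<m. hh m u i j * hh m u j k) = (if i = k then 1 else 0)"
proof (cases "sqnorm m u = 0")
  case True
  then show ?thesis using i k by (simp add: hh_def delta_sum2)
next
  case False
  define c where "c = complex_of_real (sqnorm m u)"
  have c0: "c \<noteq> 0" using False by (simp add: c_def)
  have "(\<Sum>j<m. hh m u i j * hh m u j k)
     = (\<Sum>j<m. (if i = j then 1 else 0) * (if j = k then 1 else 0))
       - (\<Sum>j<m. (if i = j then 1 else 0) * (2 * u j * cnj (u k) / c))
       - (\<Sum>j<m. (2 * u i * cnj (u j) / c) * (if j = k then 1 else 0))
       + (\<Sum>j<m. (2 * u i * cnj (u j) / c) * (2 * u j * cnj (u k) / c))"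
    unfolding hh_def c_def[symmetric]
    by (simp add: sum_subtractf sum.distrib algebra_simps)
  also have "\<dots> = (if i = k then 1 else 0) - 2 * u i * cnj (u k) / c - 2 * u i * cnj (u k) / c
       + 4 * u i * cnj (u k) / (c * c) * (\<Sum>j<m. cnj (u j) * u j)"
  proof -
    have d1: "(\<Sum>j<m. (if i = j then 1 else 0) * (if j = k then 1 else 0)) = (if i = k then 1 else (0::complex))"
      using i by (rule delta_sum2)
    have d2: "(\<Sum>j<m. (if i = j then 1 else 0) * (2 * u j * cnj (u k) / c)) = 2 * u i * cnj (u k) / c"
      using i by (rule delta_sum2)
    have d3: "(\<Sum>j<m. (2 * u i * cnj (u j) / c) * (if j = k then 1 else 0)) = 2 * u i * cnj (u k) / c"
    proof -
      have "(\<Sum>j<m. (2 * u i * cnj (u j) / c) * (if j = k then 1 else 0)) = (\<Sum>j<m. (if k = j then 1 else 0) * (2 * u i * cnj (u j) / c))"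
        by (rule sum.cong) auto
      also have "\<dots> = 2 * u i * cnj (u k) / c" using k by (rule delta_sum2)
      finally show ?thesis .
    qed
    have d4: "(\<Sum>j<m. (2 * u i * cnj (u j) / c) * (2 * u j * cnj (u k) / c))
        = 4 * u i * cnj (u k) / (c * c) * (\<Sum>j<m. cnj (u j) * u j)"
      by (simp add: sum_distrib_left sum_divide_distrib algebra_simps)
    show ?thesis by (simp only: d1 d2 d3 d4)
  qed
  also have "\<dots> = (if i = k then 1 else 0)"
    using c0 by (simp add: cnj_sq_sum cnj_sq_sum2 c_def[symmetric] field_simps)
  finally show ?thesis .
qed

lemma hh_unitary: "unitary_mat m (hh m u)"
  unfolding unitary_mat_def
proof (intro conjI allI impI)
  fix i k assume "i < m" "k < m"
  then show "(\<Sum>j<m. cnj (hh m u j i) * hh m u j k) = (if i = k then 1 else 0)"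
    using hh_sq[of i m k u] hh_herm[of m u] by (simp add: herm_def)
next
  fix i k assume "i < m" "k < m"
  then show "(\<Sum>j<m. hh m u i j * cnj (hh m u k j)) = (if i = k then 1 else 0)"
    using hh_sq[of i m k u] hh_herm[of m u] by (simp add: herm_def)
qed

lemma hh_commutes:
  assumes "\<forall>i<m. i \<in> S \<longrightarrow> u i = 0"
  shows "commutes m (hh m u) S"
  using assms unfolding commutes_def hh_def by auto


lemma delta_sum3: "k < (m::nat) \<Longrightarrow> (\<Sum>j<m. (if j = k then 1 else 0) * f j) = (f k :: complex)"
proof -
  assume "k < m"
  have "(\<Sum>j<m. (if j = k then 1 else 0) * f j) = (\<Sum>j<m. (if k = j then 1 else 0) * f j)"
    by (rule sum.cong) auto
  also have "\<dots> = f k" using \<open>k < m\<close> by (rule delta_sum2)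
  finally show ?thesis .
qed

lemma hh_apply:
  assumes k: "k < m" and n1: "sqnorm m v = 1" and vk: "v k = complex_of_real x"
    and e: "e = (\<lambda>i. if i = k then 1 else 0)"
  shows "mvec m (hh m (\<lambda>i. v i - e i)) v = e"
proof -
  define u where "u = (\<lambda>i. v i - e i)"
  define C where "C = complex_of_real (sqnorm m u)"
  have s: "(\<Sum>j<m. cnj (u j) * v j) = 1 - v k"
  proof -
    have "(\<Sum>j<m. cnj (u j) * v j) = (\<Sum>j<m. cnj (v j) * v j - (if j = k then 1 else 0) * v j)"
      by (rule sum.cong) (auto simp: u_def e algebra_simps)
    also have "\<dots> = (\<Sum>j<m. cnj (v j) * v j) - (\<Sum>j<m. (if j = k then 1 else 0) * v j)"
      by (simp only: sum_subtractf)
    also have "\<dots> = 1 - v k" using cnj_sq_sum[where u=v and m=m] n1 delta_sum3[OF k, where f=v] by simp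
    finally show ?thesis .
  qed
  have Cv: "C = 2 - 2 * complex_of_real x"
  proof -
    have "C = (\<Sum>j<m. u j * cnj (u j))" by (simp add: C_def cnj_sq_sum2)
    also have "\<dots> = (\<Sum>j<m. v j * cnj (v j) - (if j = k then 1 else 0) * v j
         - (if j = k then 1 else 0) * cnj (v j) + (if j = k then 1 else 0) * 1)"
      by (rule sum.cong) (auto simp: u_def e algebra_simps)
    also have "\<dots> = (\<Sum>j<m. v j * cnj (v j)) - (\<Sum>j<m. (if j = k then 1 else 0) * v j)
         - (\<Sum>j<m. (if j = k then 1 else 0) * cnj (v j)) + (\<Sum>j<m. (if j = k then 1 else 0) * 1)"
      by (simp only: sum_subtractf sum.distrib)
    also have "\<dots> = 2 - 2 * complex_of_real x"
      using cnj_sq_sum2[where u=v and m=m] n1 delta_sum3[OF k, where f=v] delta_sum3[OF k, where f="\<lambda>j. cnj (v j)"]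
        delta_sum3[OF k, where f="\<lambda>j. 1"] vk by simp
    finally show ?thesis .
  qed
  show ?thesis
  proof (rule ext)
    fix i
    show "mvec m (hh m (\<lambda>i. v i - e i)) v i = e i"
    proof (cases "i < m")
      case False then show ?thesis using k e by (simp add: mvec_def)
    next
      case True
      have "mvec m (hh m u) v i = (\<Sum>j<m. (if i = j then 1 else 0) * v j - 2 * u i / C * (cnj (u j) * v j))"
        using True by (simp add: mvec_def hh_def C_def[symmetric] algebra_simps)
      also have "\<dots> = (\<Sum>j<m. (if i = j then 1 else 0) * v j) - 2 * u i / C * (\<Sum>j<m. cnj (u j) * v j)"
        by (simp only: sum_subtractf sum_distrib_left)
      also have "\<dots> = (\<Sum>j<m. (if i = j then 1 else 0) * v j) - 2 * u i * (\<Sum>j<m. cnj (u j) * v j) / C"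
        by simp
      also have "\<dots> = v i - 2 * u i * (1 - v k) / C" using True delta_sum2[OF True, where f=v] s by simp
      also have "\<dots> = e i"
      proof (cases "C = 0")
        case True
        then have "sqnorm m u = 0" by (simp add: C_def)
        then have "\<forall>j<m. (cmod (u j))^2 = 0"
          unfolding sqnorm_def by (subst (asm) sum_nonneg_eq_0_iff) auto
        then have "u i = 0" using \<open>i < m\<close> by simp
        then show ?thesis using True by (simp add: u_def)
      next
        case False
        have "2 * (1 - v k) = C" using Cv vk by simp
        then have "2 * u i * (1 - v k) / C = u i * (2 * (1 - v k)) / C" by (simp add: algebra_simps)
        also have "\<dots> = u i" using False \<open>2 * (1 - v k) = C\<close> by simp
        finally have "2 * u i * (1 - v k) / C = u i" .
        then show ?thesis by (simp add: u_def)
      qed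
      finally show ?thesis by (simp add: u_def)
    qed
  qed
qed



definition extm :: "nat \<Rightarrow> (nat \<Rightarrow> nat \<Rightarrow> complex) \<Rightarrow> nat \<Rightarrow> nat \<Rightarrow> complex" where
  "extm n W = (\<lambda>i j. if i < n \<and> j < n then W i j
     else if (i = n \<and> j = Suc n) \<or> (i = Suc n \<and> j = n) \<or> (i = Suc (Suc n) \<and> j = Suc (Suc n)) then 1 else 0)"

lemma sum3: "(\<Sum>j<Suc (Suc (Suc n)). f j) = (\<Sum>j<n. f j) + f n + f (Suc n) + f (Suc (Suc n))"
  by simp

lemma unitary_extm:
  assumes W: "unitary_mat n W"
  shows "unitary_mat (Suc (Suc (Suc n))) (extm n W)"
  unfolding unitary_mat_def
proof (intro conjI allI impI)
  fix i k assume i: "i < Suc (Suc (Suc n))" and k: "k < Suc (Suc (Suc n))"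
  show "(\<Sum>j<Suc (Suc (Suc n)). cnj (extm n W j i) * extm n W j k) = (if i = k then 1 else 0)"
  proof (cases "i < n \<and> k < n")
    case True
    have "(\<Sum>j<n. cnj (extm n W j i) * extm n W j k) = (\<Sum>j<n. cnj (W j i) * W j k)"
      using True by (intro sum.cong) (auto simp: extm_def)
    then show ?thesis using True W unfolding unitary_mat_def sum3 by (simp add: extm_def)
  next
    case False
    have "(\<Sum>j<n. cnj (extm n W j i) * extm n W j k) = 0"
      using False by (intro sum.neutral) (auto simp: extm_def)
    then show ?thesis using False i k unfolding sum3 by (auto simp: extm_def less_Suc_eq)
  qed
next
  fix i k assume i: "i < Suc (Suc (Suc n))" and k: "k < Suc (Suc (Suc n))"
  show "(\<Sum>j<Suc (Suc (Suc n)). extm n W i j * cnj (extm n W k j)) = (if i = k then 1 else 0)"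
  proof (cases "i < n \<and> k < n")
    case True
    have "(\<Sum>j<n. extm n W i j * cnj (extm n W k j)) = (\<Sum>j<n. W i j * cnj (W k j))"
      using True by (intro sum.cong) (auto simp: extm_def)
    then show ?thesis using True W unfolding unitary_mat_def sum3 by (simp add: extm_def)
  next
    case False
    have "(\<Sum>j<n. extm n W i j * cnj (extm n W k j)) = 0"
      using False by (intro sum.neutral) (auto simp: extm_def)
    then show ?thesis using False i k unfolding sum3 by (auto simp: extm_def less_Suc_eq)
  qed
qed

definition emb3 :: "nat \<Rightarrow> (nat \<Rightarrow> complex) \<Rightarrow> complex \<Rightarrow> complex \<Rightarrow> nat \<Rightarrow> complex" where
  "emb3 n \<phi> t g = (\<lambda>i. if i < n then \<phi> i else if i = n then t else if i = Suc (Suc n) then g else 0)"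

lemma mvec_extm:
  "mvec (Suc (Suc (Suc n))) (extm n W) (emb3 n \<phi> t g)
   = (\<lambda>i. if i < n then mvec n W \<phi> i else if i = Suc n then t else if i = Suc (Suc n) then g else 0)"
proof (rule ext)
  fix i
  show "mvec (Suc (Suc (Suc n))) (extm n W) (emb3 n \<phi> t g) i
   = (if i < n then mvec n W \<phi> i else if i = Suc n then t else if i = Suc (Suc n) then g else 0)"
  proof (cases "i < n")
    case True
    have "(\<Sum>j<n. extm n W i j * emb3 n \<phi> t g j) = (\<Sum>j<n. W i j * \<phi> j)"
      using True by (intro sum.cong) (auto simp: extm_def emb3_def)
    then show ?thesis using True unfolding mvec_def sum3 by (simp add: extm_def emb3_def)
  next
    case False
    have "(\<Sum>j<n. extm n W i j * emb3 n \<phi> t g j) = 0"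
      using False by (intro sum.neutral) (auto simp: extm_def)
    then show ?thesis using False unfolding mvec_def sum3 by (auto simp: extm_def emb3_def less_Suc_eq)
  qed
qed

lemma step_ext:
  assumes A: "Acc \<subseteq> {..<n}" and R: "Rej \<subseteq> {..<n}"
  shows "mm_step (Suc (Suc (Suc n))) (insert (Suc n) Acc) Rej (emb3 n \<phi> t g, p, r) (extm n W)
    = (emb3 n (proj ({..<n} - Acc - Rej) (mvec n W \<phi>)) 0 g,
       p + sqnorm n (proj Acc (mvec n W \<phi>)) + (cmod t)^2,
       r + sqnorm n (proj Rej (mvec n W \<phi>)))"
proof -
  let ?y = "(\<lambda>i. if i < n then mvec n W \<phi> i else if i = Suc n then t else if i = Suc (Suc n) then g else 0)"
  have 1: "proj ({..<Suc (Suc (Suc n))} - insert (Suc n) Acc - Rej) ?y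
      = emb3 n (proj ({..<n} - Acc - Rej) (mvec n W \<phi>)) 0 g"
    using A R by (auto simp: proj_def emb3_def fun_eq_iff)
  have 2: "sqnorm (Suc (Suc (Suc n))) (proj (insert (Suc n) Acc) ?y) = sqnorm n (proj Acc (mvec n W \<phi>)) + (cmod t)^2"
  proof -
    have "(\<Sum>i<n. (cmod (proj (insert (Suc n) Acc) ?y i))^2) = (\<Sum>i<n. (cmod (proj Acc (mvec n W \<phi>) i))^2)"
      by (intro sum.cong) (auto simp: proj_def)
    then show ?thesis using A unfolding sqnorm_def sum3 by (auto simp: proj_def)
  qed
  have 3: "sqnorm (Suc (Suc (Suc n))) (proj Rej ?y) = sqnorm n (proj Rej (mvec n W \<phi>))"
  proof -
    have "(\<Sum>i<n. (cmod (proj Rej ?y i))^2) = (\<Sum>i<n. (cmod (proj Rej (mvec n W \<phi>) i))^2)"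
      by (intro sum.cong) (auto simp: proj_def)
    then show ?thesis using R unfolding sqnorm_def sum3 by (auto simp: proj_def)
  qed
  show ?thesis unfolding mm_step_def Let_def by (simp add: mvec_extm 1 2 3)
qed



lemma sqnorm_nonneg: "0 \<le> sqnorm n v"
  unfolding sqnorm_def by (rule sum_nonneg) simp

lemma rel_step:
  assumes A: "Acc \<subseteq> {..<n}" and R: "Rej \<subseteq> {..<n}"
    and rel: "fst X'' = emb3 n (fst X) t g" "fst (snd X'') + (cmod t)^2 = fst (snd X)"
  shows "fst (mm_step (Suc (Suc (Suc n))) (insert (Suc n) Acc) Rej X'' (extm n W))
           = emb3 n (fst (mm_step n Acc Rej X W)) 0 g"
    "fst (snd (mm_step (Suc (Suc (Suc n))) (insert (Suc n) Acc) Rej X'' (extm n W))) + (cmod 0)^2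
           = fst (snd (mm_step n Acc Rej X W))"
proof -
  obtain a b c where X'': "X'' = (a, b, c)" by (cases X'') auto
  obtain a' b' c' where X: "X = (a', b', c')" by (cases X) auto
  have a: "a = emb3 n a' t g" and b: "b + (cmod t)^2 = b'" using rel X X'' by auto
  show "fst (mm_step (Suc (Suc (Suc n))) (insert (Suc n) Acc) Rej X'' (extm n W))
           = emb3 n (fst (mm_step n Acc Rej X W)) 0 g"
    unfolding X'' X a step_ext[OF A R] by (simp add: mm_step_def Let_def)
  show "fst (snd (mm_step (Suc (Suc (Suc n))) (insert (Suc n) Acc) Rej X'' (extm n W))) + (cmod 0)^2
           = fst (snd (mm_step n Acc Rej X W))"
    unfolding X'' X a step_ext[OF A R] using b by (simp add: mm_step_def Let_def)
qed

lemma rel_run: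
  assumes A: "Acc \<subseteq> {..<n}" and R: "Rej \<subseteq> {..<n}"
  shows "fst (snd (foldl (mm_step (Suc (Suc (Suc n))) (insert (Suc n) Acc) Rej) (emb3 n \<psi> t g, 0, 0)
              (map (\<lambda>s. extm n (U s)) (xs @ [z]))))
       = fst (snd (foldl (mm_step n Acc Rej) (\<psi>, (cmod t)^2, r) (map U (xs @ [z]))))"
proof -
  define Rel where "Rel = (\<lambda>(X'' :: (nat \<Rightarrow> complex) \<times> real \<times> real) (X :: (nat \<Rightarrow> complex) \<times> real \<times> real). \<exists>t g. fst X'' = emb3 n (fst X) t g \<and> fst (snd X'') + (cmod t)^2 = fst (snd X))"
  have "Rel (foldl (\<lambda>a s. mm_step (Suc (Suc (Suc n))) (insert (Suc n) Acc) Rej a (extm n (U s))) (emb3 n \<psi> t g, 0, 0) xs)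
            (foldl (\<lambda>a s. mm_step n Acc Rej a (U s)) (\<psi>, (cmod t)^2, r) xs)"
  proof (rule foldl_rel[where R = Rel])
    show "Rel (emb3 n \<psi> t g, 0, 0) (\<psi>, (cmod t)^2, r)" unfolding Rel_def by auto
  next
    fix X'' X s assume "Rel X'' X"
    then obtain t g where "fst X'' = emb3 n (fst X) t g" "fst (snd X'') + (cmod t)^2 = fst (snd X)"
      unfolding Rel_def by auto
    from rel_step[OF A R this, of "U s"]
    show "Rel (mm_step (Suc (Suc (Suc n))) (insert (Suc n) Acc) Rej X'' (extm n (U s))) (mm_step n Acc Rej X (U s))"
      unfolding Rel_def by blast
  qed
  then obtain t' g' where r1:
      "fst (foldl (\<lambda>a s. mm_step (Suc (Suc (Suc n))) (insert (Suc n) Acc) Rej a (extm n (U s))) (emb3 n \<psi> t g, 0, 0) xs)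
        = emb3 n (fst (foldl (\<lambda>a s. mm_step n Acc Rej a (U s)) (\<psi>, (cmod t)^2, r) xs)) t' g'"
      "fst (snd (foldl (\<lambda>a s. mm_step (Suc (Suc (Suc n))) (insert (Suc n) Acc) Rej a (extm n (U s))) (emb3 n \<psi> t g, 0, 0) xs))
        + (cmod t')^2 = fst (snd (foldl (\<lambda>a s. mm_step n Acc Rej a (U s)) (\<psi>, (cmod t)^2, r) xs))"
    unfolding Rel_def by blast
  show ?thesis
    using rel_step(2)[OF A R r1, of "U z"] by (simp add: foldl_map)
qed



theorem theoremA2:
  fixes n :: nat and Uc :: "nat \<Rightarrow> nat \<Rightarrow> complex"
    and U :: "'a::finite option \<Rightarrow> nat \<Rightarrow> nat \<Rightarrow> complex"
    and q0 :: nat and Acc Rej :: "nat set"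
  assumes "mmqfa2 n Uc U q0 Acc Rej"
  shows "\<exists>n' (U' :: 'a option \<Rightarrow> nat \<Rightarrow> nat \<Rightarrow> complex) q0' Acc' Rej'.
           mmqfa1 n' U' q0' Acc' Rej' \<and>
           (\<forall>x. acc1 n' U' q0' Acc' Rej' x = acc2 n Uc U q0 Acc Rej x)"
proof -
  have Uc: "unitary_mat n Uc" and q0: "q0 < n" and A: "Acc \<subseteq> {..<n}" and R: "Rej \<subseteq> {..<n}"
    and AR: "Acc \<inter> Rej = {}" and U: "\<And>\<sigma>. unitary_mat n (U \<sigma>)"
    using assms by (auto simp: mmqfa2_def mmqfa1_def)
  define e0 where "e0 = (\<lambda>i. if i = q0 then 1 else (0::complex))"
  define w where "w = mvec n Uc e0"
  define Non where "Non = {..<n} - Acc - Rej"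
  define \<psi>1 where "\<psi>1 = proj Non w"
  define a0 where "a0 = sqnorm n (proj Acc w)"
  define r0 where "r0 = sqnorm n (proj Rej w)"
  define N where "N = Suc (Suc (Suc n))"
  define v where "v = emb3 n \<psi>1 (complex_of_real (sqrt a0)) (complex_of_real (sqrt r0))"
  define E where "E = (\<lambda>i. if i = n then 1 else (0::complex))"
  define V where "V = hh N (\<lambda>i. v i - E i)"
  define U' where "U' = (\<lambda>s. mmul N V (mmul N (extm n (U s)) V))"
  have a0nn: "0 \<le> a0" and r0nn: "0 \<le> r0" by (simp_all add: a0_def r0_def sqnorm_nonneg)
  have init: "mm_step n Acc Rej (e0, 0, 0) Uc = (\<psi>1, a0, r0)"
    by (simp add: mm_step_def Let_def \<psi>1_def a0_def r0_def Non_def w_def)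
  have nw: "sqnorm n w = 1"
  proof -
    have "sqnorm n w = sqnorm n e0" unfolding w_def by (rule sqnorm_mvec[OF Uc])
    also have "\<dots> = 1"
    proof -
      have "(\<Sum>i<n. (cmod (e0 i))^2) = (\<Sum>i<n. if i = q0 then 1 else 0)"
        by (intro sum.cong) (auto simp: e0_def)
      also have "\<dots> = 1" using q0 by simp
      finally show ?thesis by (simp add: sqnorm_def)
    qed
    finally show ?thesis .
  qed
  have split: "sqnorm n w = sqnorm n \<psi>1 + a0 + r0"
  proof -
    have "sqnorm n w = (\<Sum>i<n. (cmod (\<psi>1 i))^2 + (cmod (proj Acc w i))^2 + (cmod (proj Rej w i))^2)"
      unfolding sqnorm_def using AR by (intro sum.cong) (auto simp: \<psi>1_def proj_def Non_def)
    then show ?thesis by (simp add: sum.distrib sqnorm_def a0_def r0_def)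
  qed
  have nv: "sqnorm N v = 1"
  proof -
    have "sqnorm N v = sqnorm n \<psi>1 + a0 + r0"
      unfolding sqnorm_def N_def sum3 using a0nn r0nn by (simp add: v_def emb3_def)
    then show ?thesis using nw split by simp
  qed
  have VE: "mvec N V v = E"
  proof -
    have vn: "v n = complex_of_real (sqrt a0)" by (simp add: v_def emb3_def)
    have nN: "n < N" by (simp add: N_def)
    show ?thesis unfolding V_def by (rule hh_apply[OF nN nv vn]) (simp add: E_def)
  qed
  have suppv: "supp N v" by (auto simp: supp_def v_def emb3_def N_def)
  have cA: "commutes N V (insert (Suc n) Acc)"
    unfolding V_def
    by (rule hh_commutes) (use A in \<open>auto simp: v_def emb3_def E_def \<psi>1_def proj_def Non_def\<close>)
  have cR: "commutes N V Rej"
    unfolding V_def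
    by (rule hh_commutes) (use R in \<open>auto simp: v_def emb3_def E_def \<psi>1_def proj_def Non_def\<close>)
  have uV: "unitary_mat N V" unfolding V_def by (rule hh_unitary)
  have hV: "herm V" unfolding V_def by (rule hh_herm)
  have m1: "mmqfa1 N U' n (insert (Suc n) Acc) Rej"
    unfolding mmqfa1_def U'_def
    using A R AR by (auto simp: N_def intro!: unitary_mmul uV[unfolded N_def] unitary_extm U)
  have eq: "acc1 N U' n (insert (Suc n) Acc) Rej x = acc2 n Uc U q0 Acc Rej x" for x
  proof -
    have l1: "map (\<lambda>a. U' (Some a)) x @ [U' None] = map U' (map Some x @ [None])" by simp
    have l2: "map (\<lambda>a. U (Some a)) x @ [U None] = map U (map Some x @ [None])" by simp
    have "acc1 N U' n (insert (Suc n) Acc) Rej x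
        = fst (snd (foldl (mm_step N (insert (Suc n) Acc) Rej) (mvec N V v, 0, 0) (map U' (map Some x @ [None]))))"
      unfolding acc1_def mm_acc_run_def l1 VE by (simp add: E_def)
    also have "\<dots> = fst (snd (foldl (mm_step N (insert (Suc n) Acc) Rej) (v, 0, 0)
                      (map (\<lambda>s. extm n (U s)) (map Some x @ [None]))))"
      unfolding U'_def by (simp only: run_conj[OF uV hV cA cR suppv, of 0 0 "\<lambda>s. extm n (U s)" "map Some x @ [None]"] snd_conv)
    also have "\<dots> = fst (snd (foldl (mm_step n Acc Rej) (\<psi>1, (cmod (complex_of_real (sqrt a0)))^2, r0)
                      (map U (map Some x @ [None]))))"
      unfolding v_def N_def by (rule rel_run[OF A R])
    also have "\<dots> = fst (snd (foldl (mm_step n Acc Rej) (\<psi>1, a0, r0) (map U (map Some x @ [None]))))"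
      using a0nn by simp
    also have "\<dots> = acc2 n Uc U q0 Acc Rej x"
      unfolding acc2_def mm_acc_run_def l2 using init by (simp add: e0_def)
    finally show ?thesis .
  qed
  show ?thesis using m1 eq by blast
qed

end
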